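(* The closure of $\mathrm{Conv}(\mathcal M_{\mathrm{PR}})$ in the topology of componentwise weak convergence equals $\mathcal M_{\mathrm{NS}}$. In particular, for every $\boldsymbol\mu\in\mathcal M_{\mathrm{NS}}$ there exists a sequence $(\boldsymbol\mu_n)_{n\in\mathbb N}$ in $\mathrm{Conv}(\mathcal M_{\mathrm{PR}})$ such that $[\boldsymbol\mu_n]_{x,y}\to[\boldsymbol\mu]_{x,y}$ weakly for all $x,y\in\{0,1\}$; that is, $\mathrm{Conv}(\mathcal M_{\mathrm{PR}})$ is dense in $\mathcal M_{\mathrm{NS}}$.
   Context: A behaviour is a family $\boldsymbol\mu=(\mu_{x,y})_{x,y\in\{0,1\}}$ of Borel probability measures on $\mathbb R\times\mathbb R$, with $[\boldsymbol\mu]_{x,y}:=\mu_{x,y}$; convex combinations are componentwise. It is no-signaling if $\mu_{x,0}(A\times\mathbb R)=\mu_{x,1}(A\times\mathbb R)$ for all $x\in\{0,1\}$ and Borel $A\subseteq\mathbb R$, and $\mu_{0,y}(\mathbb R\times B)=\mu_{1,y}(\mathbb R\times B)$ for all $y\in\{0,1\}$ and Borel $B$; $\mathcal M_{\mathrm{NS}}$ is the set of no-signaling behaviours. $\delta_{a,b}$ is the Dirac measure at $(a,b)\in\mathbb R^2$. A CV PR box of order $k\in\mathbb N$ is a behaviour with $\mu_{x,y}=\frac1k\sum_{j=1}^k\delta_{a_{x,j},\,b_{y,[j+xy]_k}}$, where for each $x,y$ the vectors $\boldsymbol a_x,\boldsymbol b_y\in\mathbb R^k$ each have pairwise distinct components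 and $[\,\cdot\,]_k$ is reduction modulo $k$ into $\{1,\dots,k\}$; $\mathcal M_{\mathrm{PR}}$ is the set of all CV PR boxes of all orders. $\mathrm{Conv}(\mathcal M)$ is the set of all finite convex combinations $\sum_{i=1}^n q_i\boldsymbol\mu_i$ with $\boldsymbol\mu_i\in\mathcal M$, $q_i\ge0$, $\sum_iq_i=1$. A sequence of probability measures $\mu_n$ converges weakly to $\mu$ if $\int f\,d\mu_n\to\int f\,d\mu$ for every bounded continuous $f:\mathbb R^2\to\mathbb R$; behaviours converge if every component does. *)

theory Defs
  imports "HOL-Probability.Probability"
begin

text \<open>A behaviour: inputs x, y range over bool (False = 0, True = 1); each component is a
  Borel probability measure on the plane.\<close>
type_synonym behaviour = "bool \<Rightarrow> bool \<Rightarrow> (real \<times> real) measure"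

definition is_behaviour :: "behaviour \<Rightarrow> bool" where
  "is_behaviour \<mu> \<longleftrightarrow>
     (\<forall>x y. prob_space (\<mu> x y) \<and> sets (\<mu> x y) = sets (borel :: (real \<times> real) measure))"

definition mixture :: "('i \<Rightarrow> real) \<Rightarrow> ('i \<Rightarrow> (real \<times> real) measure) \<Rightarrow> 'i set
                        \<Rightarrow> (real \<times> real) measure" where
  "mixture q M I = measure_of UNIV (sets (borel :: (real \<times> real) measure))
                     (\<lambda>A. \<Sum>i\<in>I. ennreal (q i) * emeasure (M i) A)"

definition no_signaling :: "behaviour \<Rightarrow> bool" where
  "no_signaling \<mu> \<longleftrightarrow> is_behaviour \<mu> \<and>
     (\<forall>x A. A \<in> sets (borel :: real measure) \<longrightarrow>
        emeasure (\<mu> x False) (A \<times> UNIV) = emeasure (\<mu> x True) (A \<times> UNIV)) \<and>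
     (\<forall>y B. B \<in> sets (borel :: real measure) \<longrightarrow>
        emeasure (\<mu> False y) (UNIV \<times> B) = emeasure (\<mu> True y) (UNIV \<times> B))"

text \<open>CV PR box of order k, with indices j shifted to {0..<k} and reduction mod k.\<close>
definition PR_box :: "behaviour \<Rightarrow> bool" where
  "PR_box \<mu> \<longleftrightarrow> (\<exists>(k::nat) (a :: bool \<Rightarrow> nat \<Rightarrow> real) (b :: bool \<Rightarrow> nat \<Rightarrow> real).
     k \<ge> 1 \<and> (\<forall>x. inj_on (a x) {..<k}) \<and> (\<forall>y. inj_on (b y) {..<k}) \<and>
     \<mu> = (\<lambda>x y. mixture (\<lambda>_. 1 / real k)
                 (\<lambda>j. return borel (a x j, b y ((j + of_bool (x \<and> y)) mod k))) {..<k}))"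

definition Conv_PR :: "behaviour set" where
  "Conv_PR = {\<nu>. \<exists>(n::nat) (q :: nat \<Rightarrow> real) (\<mu>s :: nat \<Rightarrow> behaviour).
     (\<forall>i<n. PR_box (\<mu>s i) \<and> q i \<ge> 0) \<and> (\<Sum>i<n. q i) = 1 \<and>
     \<nu> = (\<lambda>x y. mixture q (\<lambda>i. \<mu>s i x y) {..<n})}"

definition weak_conv_plane :: "(nat \<Rightarrow> (real \<times> real) measure) \<Rightarrow> (real \<times> real) measure \<Rightarrow> bool" where
  "weak_conv_plane M N \<longleftrightarrow> (\<forall>f :: real \<times> real \<Rightarrow> real. continuous_on UNIV f \<and> bounded (range f) \<longrightarrow>
      (\<lambda>n. integral\<^sup>L (M n) f) \<longlonglongrightarrow> integral\<^sup>L N f)"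

end

theory Submission
  imports Defs
begin


definition prw :: "nat \<Rightarrow> (bool \<Rightarrow> nat \<Rightarrow> real) \<Rightarrow> (bool \<Rightarrow> nat \<Rightarrow> real) \<Rightarrow> bool \<Rightarrow> bool \<Rightarrow> real \<times> real \<Rightarrow> real" where
  "prw k a b x y p = (\<Sum>j<k. if (a x j, b y ((j + of_bool (x \<and> y)) mod k)) = p then 1 / real k else 0)"

definition validPR :: "nat \<Rightarrow> (bool \<Rightarrow> nat \<Rightarrow> real) \<Rightarrow> (bool \<Rightarrow> nat \<Rightarrow> real) \<Rightarrow> bool" where
  "validPR k a b \<longleftrightarrow> k \<ge> 1 \<and> (\<forall>x. inj_on (a x) {..<k}) \<and> (\<forall>y. inj_on (b y) {..<k})"

lemma prw_nonneg: "prw k a b x y p \<ge> 0"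
  unfolding prw_def by (intro sum_nonneg) auto

lemma sum_prw:
  assumes "finite S" "\<forall>j<k. (a x j, b y ((j + of_bool (x \<and> y)) mod k)) \<in> S"
  shows "(\<Sum>p\<in>{p\<in>S. P p}. prw k a b x y p) =
         (\<Sum>j<k. if P (a x j, b y ((j + of_bool (x \<and> y)) mod k)) then 1 / real k else 0)"
proof -
  have "(\<Sum>p\<in>{p\<in>S. P p}. prw k a b x y p) =
    (\<Sum>j<k. \<Sum>p\<in>{p\<in>S. P p}. if (a x j, b y ((j + of_bool (x \<and> y)) mod k)) = p then 1 / real k else 0)"
    unfolding prw_def by (rule sum.swap)
  also have "\<dots> = (\<Sum>j<k. if P (a x j, b y ((j + of_bool (x \<and> y)) mod k)) then 1 / real k else 0)"
  proof (rule sum.cong[OF refl])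
    fix j assume "j \<in> {..<k}"
    then have "(a x j, b y ((j + of_bool (x \<and> y)) mod k)) \<in> S" using assms(2) by auto
    then show "(\<Sum>p\<in>{p\<in>S. P p}. if (a x j, b y ((j + of_bool (x \<and> y)) mod k)) = p then 1 / real k else 0)
       = (if P (a x j, b y ((j + of_bool (x \<and> y)) mod k)) then 1 / real k else 0)"
      using assms(1) by (simp add: sum.delta)
  qed
  finally show ?thesis .
qed

lemma mod_add_cancel_nat: "(i + c) mod (k::nat) = (j + c) mod k \<Longrightarrow> i mod k = j mod k"
  by (simp add: nat_mod_eq_iff)

lemma sum_shift_mod:
  fixes g :: "nat \<Rightarrow> 'b::comm_monoid_add"
  assumes "k \<ge> 1"
  shows "(\<Sum>j<k. g ((j + c) mod k)) = (\<Sum>j<k. g j)"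
proof -
  have inj: "inj_on (\<lambda>j. (j + c) mod k) {..<k}"
  proof
    fix i j assume "i \<in> {..<k}" "j \<in> {..<k}" and eq: "(i + c) mod k = (j + c) mod k"
    have "i mod k = j mod k" using eq by (rule mod_add_cancel_nat)
    with \<open>i \<in> {..<k}\<close> \<open>j \<in> {..<k}\<close> show "i = j" by (metis lessThan_iff mod_less)
  qed
  have img: "(\<lambda>j. (j + c) mod k) ` {..<k} = {..<k}"
  proof -
    have "(\<lambda>j. (j + c) mod k) ` {..<k} \<subseteq> {..<k}" using assms by auto
    moreover have "card ((\<lambda>j. (j + c) mod k) ` {..<k}) = card {..<k}" using inj card_image by blast
    ultimately show ?thesis by (simp add: card_subset_eq)
  qed
  show ?thesis using sum.reindex[OF inj, of g] img by simp
qed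

lemma funpow_period:
  assumes "(f ^^ k) c = c"
  shows "(f ^^ (q * k)) c = c"
proof (induction q)
  case (Suc q)
  have "(f ^^ (Suc q * k)) c = (f ^^ k) ((f ^^ (q * k)) c)"
    by (simp add: funpow_add)
  then show ?case using Suc assms by simp
qed simp

lemma funpow_mod:
  assumes "(f ^^ k) c = c"
  shows "(f ^^ m) c = (f ^^ (m mod k)) c"
proof -
  have "(f ^^ m) c = (f ^^ (m mod k + (m div k) * k)) c" by simp
  also have "\<dots> = (f ^^ (m mod k)) ((f ^^ ((m div k) * k)) c)" by (simp only: funpow_add o_apply)
  also have "\<dots> = (f ^^ (m mod k)) c" using funpow_period[OF assms] by simp
  finally show ?thesis .
qed

lemma periodic_point:
  assumes "finite P" "f ` P \<subseteq> P" "a \<in> P"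
  shows "\<exists>c\<in>P. \<exists>k\<ge>1. (f ^^ k) c = c \<and> inj_on (\<lambda>j. (f ^^ j) c) {..<k}"
proof -
  have inP: "(f ^^ j) a \<in> P" for j
    by (induction j) (use assms in auto)
  have "\<not> inj_on (\<lambda>j. (f ^^ j) a) {..card P}"
  proof
    assume "inj_on (\<lambda>j. (f ^^ j) a) {..card P}"
    then have "card ((\<lambda>j. (f ^^ j) a) ` {..card P}) = Suc (card P)"
      by (simp add: card_image)
    moreover have "card ((\<lambda>j. (f ^^ j) a) ` {..card P}) \<le> card P"
      using inP assms(1) by (intro card_mono) auto
    ultimately show False by simp
  qed
  then obtain i0 j0 where ij0: "i0 \<noteq> j0" "(f ^^ i0) a = (f ^^ j0) a"
    unfolding inj_on_def by blast
  obtain i j where ij: "i < j" "(f ^^ i) a = (f ^^ j) a"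
  proof (cases "i0 < j0")
    case True
    then show ?thesis using that ij0 by blast
  next
    case False
    then have "j0 < i0" using ij0 by simp
    then show ?thesis using that ij0 by metis
  qed
  define c0 where "c0 = (f ^^ i) a"
  have per0: "(f ^^ (j - i)) c0 = c0"
  proof -
    have "(f ^^ (j - i)) c0 = (f ^^ (j - i + i)) a" unfolding c0_def by (simp only: funpow_add o_apply)
    also have "\<dots> = (f ^^ j) a" using ij(1) by simp
    also have "\<dots> = c0" unfolding c0_def using ij(2) by (rule sym)
    finally show ?thesis .
  qed
  define k where "k = (LEAST k. k > 0 \<and> (f ^^ k) c0 = c0)"
  have kprop: "k > 0 \<and> (f ^^ k) c0 = c0"
    unfolding k_def by (rule LeastI[of _ "j - i"]) (use ij per0 in auto)
  have kmin: "(f ^^ m) c0 \<noteq> c0" if "0 < m" "m < k" for m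
    using not_less_Least[of m "\<lambda>k. k > 0 \<and> (f ^^ k) c0 = c0"] that unfolding k_def by auto
  have inj: "inj_on (\<lambda>j. (f ^^ j) c0) {..<k}"
  proof (rule ccontr)
    assume "\<not> inj_on (\<lambda>j. (f ^^ j) c0) {..<k}"
    then obtain u0 v0 where uv0: "u0 < k" "v0 < k" "u0 \<noteq> v0" "(f ^^ u0) c0 = (f ^^ v0) c0"
      unfolding inj_on_def by auto
    obtain u v where uv: "u < v" "v < k" "(f ^^ u) c0 = (f ^^ v) c0"
    proof (cases "u0 < v0")
      case True
      then show ?thesis using that uv0 by blast
    next
      case False
      then have "v0 < u0" using uv0 by simp
      then show ?thesis using that uv0 by metis
    qed
    have "(f ^^ (k - v + u)) c0 = (f ^^ (k - v)) ((f ^^ u) c0)" by (simp add: funpow_add)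
    also have "\<dots> = (f ^^ (k - v)) ((f ^^ v) c0)" using uv(3) by (rule arg_cong)
    also have "\<dots> = (f ^^ (k - v + v)) c0" by (simp add: funpow_add)
    also have "\<dots> = c0" using uv(1,2) kprop by simp
    finally have "(f ^^ (k - v + u)) c0 = c0" .
    moreover have "0 < k - v + u" "k - v + u < k" using uv(1,2) by auto
    ultimately show False using kmin[of "k - v + u"] by auto
  qed
  have "c0 \<in> P" unfolding c0_def by (rule inP)
  then show ?thesis
    using kprop inj by (intro bexI[of _ c0] exI[of _ k]) auto
qed

lemma ex_pos_sum:
  fixes f :: "'a \<Rightarrow> real"
  assumes "finite T" "0 < sum f T"
  shows "\<exists>p\<in>T. 0 < f p"
proof (rule ccontr)
  assume "\<not> (\<exists>p\<in>T. 0 < f p)"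
  then have "sum f T \<le> 0" by (intro sum_nonpos) auto
  with assms show False by simp
qed

locale nsw =
  fixes S :: "(real \<times> real) set" and w :: "bool \<Rightarrow> bool \<Rightarrow> real \<times> real \<Rightarrow> real"
  assumes fin: "finite S"
    and nn: "\<forall>x y p. 0 \<le> w x y p"
    and z: "\<forall>x y p. p \<notin> S \<longrightarrow> w x y p = 0"
    and na: "\<forall>x a. (\<Sum>p\<in>{p\<in>S. fst p = a}. w x False p) = (\<Sum>p\<in>{p\<in>S. fst p = a}. w x True p)"
    and nb: "\<forall>y b. (\<Sum>p\<in>{p\<in>S. snd p = b}. w False y p) = (\<Sum>p\<in>{p\<in>S. snd p = b}. w True y p)"
begin

lemma inS: "0 < w x y p \<Longrightarrow> p \<in> S"
proof (rule ccontr)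
  assume "0 < w x y p" "p \<notin> S"
  then show False using z by simp
qed

lemma na': "(\<Sum>p\<in>{p\<in>S. fst p = a}. w x y p) = (\<Sum>p\<in>{p\<in>S. fst p = a}. w x y' p)"
proof -
  have e: "(\<Sum>p\<in>{p\<in>S. fst p = a}. w x False p) = (\<Sum>p\<in>{p\<in>S. fst p = a}. w x True p)"
    using na by blast
  show ?thesis by (cases y; cases y') (use e in simp_all)
qed

lemma nb': "(\<Sum>p\<in>{p\<in>S. snd p = b}. w x y p) = (\<Sum>p\<in>{p\<in>S. snd p = b}. w x' y p)"
proof -
  have e: "(\<Sum>p\<in>{p\<in>S. snd p = b}. w False y p) = (\<Sum>p\<in>{p\<in>S. snd p = b}. w True y p)"
    using nb by blast
  show ?thesis by (cases x; cases x') (use e in simp_all)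
qed

lemma switch_y:
  assumes "0 < w x y (a, b)"
  shows "\<exists>b'. 0 < w x y' (a, b')"
proof -
  have "(a, b) \<in> {p\<in>S. fst p = a}" using inS[OF assms] by simp
  then have "w x y (a, b) \<le> (\<Sum>p\<in>{p\<in>S. fst p = a}. w x y p)"
    using fin nn by (intro member_le_sum) auto
  then have "0 < (\<Sum>p\<in>{p\<in>S. fst p = a}. w x y' p)" using assms na'[where a=a and x=x and y=y and y'=y'] by simp
  moreover have "finite {p\<in>S. fst p = a}" using fin by simp
  ultimately obtain p where "p \<in> {p\<in>S. fst p = a}" "0 < w x y' p"
    using ex_pos_sum by blast
  then show ?thesis by (intro exI[of _ "snd p"]) (metis (mono_tags, lifting) mem_Collect_eq prod.collapse)
qed

lemma switch_x:
  assumes "0 < w x y (a, b)"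
  shows "\<exists>a'. 0 < w x' y (a', b)"
proof -
  have "(a, b) \<in> {p\<in>S. snd p = b}" using inS[OF assms] by simp
  then have "w x y (a, b) \<le> (\<Sum>p\<in>{p\<in>S. snd p = b}. w x y p)"
    using fin nn by (intro member_le_sum) auto
  then have "0 < (\<Sum>p\<in>{p\<in>S. snd p = b}. w x' y p)" using assms nb'[where b=b and x=x and y=y and x'=x'] by simp
  moreover have "finite {p\<in>S. snd p = b}" using fin by simp
  ultimately obtain p where "p \<in> {p\<in>S. snd p = b}" "0 < w x' y p"
    using ex_pos_sum by blast
  then show ?thesis by (intro exI[of _ "fst p"]) (metis (mono_tags, lifting) mem_Collect_eq prod.collapse)
qed

lemma total: "(\<Sum>p\<in>S. w x y p) = (\<Sum>p\<in>S. w False False p)"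
proof -
  have A: "(\<Sum>p\<in>S. w x y p) = (\<Sum>p\<in>S. w x y' p)" for x y y'
  proof -
    have "(\<Sum>p\<in>S. w x y p) = (\<Sum>a\<in>fst ` S. \<Sum>p\<in>{p\<in>S. fst p = a}. w x y p)"
      using fin by (rule sum.image_gen)
    also have "\<dots> = (\<Sum>a\<in>fst ` S. \<Sum>p\<in>{p\<in>S. fst p = a}. w x y' p)"
      by (rule sum.cong[OF refl]) (rule na')
    also have "\<dots> = (\<Sum>p\<in>S. w x y' p)"
      using fin by (rule sum.image_gen[symmetric])
    finally show ?thesis .
  qed
  have B: "(\<Sum>p\<in>S. w x y p) = (\<Sum>p\<in>S. w x' y p)" for x x' y
  proof -
    have "(\<Sum>p\<in>S. w x y p) = (\<Sum>a\<in>snd ` S. \<Sum>p\<in>{p\<in>S. snd p = a}. w x y p)"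
      using fin by (rule sum.image_gen)
    also have "\<dots> = (\<Sum>a\<in>snd ` S. \<Sum>p\<in>{p\<in>S. snd p = a}. w x' y p)"
      by (rule sum.cong[OF refl]) (rule nb')
    also have "\<dots> = (\<Sum>p\<in>S. w x' y p)"
      using fin by (rule sum.image_gen[symmetric])
    finally show ?thesis .
  qed
  show ?thesis using A[of x y False] B[of x False False] by simp
qed

lemma find_PR:
  assumes p0: "0 < w False False p0"
  shows "\<exists>k a b. validPR k a b \<and>
     (\<forall>x y j. j < k \<longrightarrow> 0 < w x y (a x j, b y ((j + of_bool (x \<and> y)) mod k)))"
proof -
  define B0 where "B0 a = (SOME b. 0 < w False False (a, b))" for a
  define A1 where "A1 b = (SOME a. 0 < w True False (a, b))" for b
  define B1 where "B1 a = (SOME b. 0 < w True True (a, b))" for a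
  define A0 where "A0 b = (SOME a. 0 < w False True (a, b))" for b
  define P0 where "P0 = {a. \<exists>b. 0 < w False False (a, b)}"
  define \<Phi> where "\<Phi> a = A0 (B1 (A1 (B0 a)))" for a
  have e00: "0 < w False False (a, B0 a)" if aP: "a \<in> P0" for a
  proof -
    obtain b where "0 < w False False (a, b)" using aP unfolding P0_def by blast
    then show ?thesis unfolding B0_def by (rule someI)
  qed
  have e10: "0 < w True False (A1 (B0 a), B0 a)" if aP: "a \<in> P0" for a
  proof -
    obtain a' where "0 < w True False (a', B0 a)" using switch_x[OF e00[OF aP], of True] by blast
    then show ?thesis unfolding A1_def by (rule someI)
  qed
  have e11: "0 < w True True (A1 (B0 a), B1 (A1 (B0 a)))" if aP: "a \<in> P0" for a
  proof -
    obtain b' where "0 < w True True (A1 (B0 a), b')" using switch_y[OF e10[OF aP], of True] by blast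
    then show ?thesis unfolding B1_def by (rule someI)
  qed
  have e01: "0 < w False True (\<Phi> a, B1 (A1 (B0 a)))" if aP: "a \<in> P0" for a
  proof -
    obtain a' where "0 < w False True (a', B1 (A1 (B0 a)))" using switch_x[OF e11[OF aP], of False] by blast
    then show ?thesis unfolding A0_def \<Phi>_def by (rule someI)
  qed
  have inv: "\<Phi> a \<in> P0" if aP: "a \<in> P0" for a
  proof -
    obtain b' where "0 < w False False (\<Phi> a, b')" using switch_y[OF e01[OF aP], of False] by blast
    then show ?thesis unfolding P0_def by blast
  qed
  have finP0: "finite P0"
  proof (rule finite_subset[OF _ finite_imageI[OF fin, of fst]])
    show "P0 \<subseteq> fst ` S" unfolding P0_def using inS by force
  qed
  have "fst p0 \<in> P0" using p0 unfolding P0_def by (intro CollectI exI[of _ "snd p0"]) simp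
  then obtain c k where c: "c \<in> P0" "k \<ge> 1" "(\<Phi> ^^ k) c = c" and cinj: "inj_on (\<lambda>j. (\<Phi> ^^ j) c) {..<k}"
    using periodic_point[OF finP0, of \<Phi>] inv by blast
  define C where "C j = (\<Phi> ^^ j) c" for j
  have CP: "C j \<in> P0" for j
    unfolding C_def by (induction j) (use c inv in auto)
  have CSuc: "C (Suc j) = \<Phi> (C j)" for j
    unfolding C_def by simp
  have Cmod: "C m = C (m mod k)" for m
    unfolding C_def by (rule funpow_mod[OF c(3)])
  have Cinj: "m mod k = m' mod k" if "C m = C m'" for m m'
  proof -
    have "C (m mod k) = C (m' mod k)" using that Cmod by metis
    moreover have "m mod k \<in> {..<k}" "m' mod k \<in> {..<k}" using c(2) by auto
    ultimately show ?thesis using cinj unfolding C_def inj_on_def by blast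
  qed
  have Ck: "C (j + k) = C j" for j
  proof -
    have "(j + k) mod k = j mod k" by simp
    then show ?thesis by (metis Cmod)
  qed
  define a where "a x j = (if x then A1 (B0 (C j)) else C j)" for x j
  define b where "b y j = (if y then B1 (A1 (B0 (C (j + k - 1)))) else B0 (C j))" for y j
  have sub: "Suc (j + k - 1) = j + k" for j using c(2) by simp
  have injS: "i = j" if "i < k" "j < k" "C (Suc i) = C (Suc j)" for i j
  proof -
    have "(i + 1) mod k = (j + 1) mod k" using Cinj[OF that(3)] by simp
    then have "i mod k = j mod k" by (rule mod_add_cancel_nat)
    then show ?thesis using that by simp
  qed
  have valid: "validPR k a b"
    unfolding validPR_def
  proof (intro conjI allI)
    show "1 \<le> k" by (rule c(2))
  next
    fix x show "inj_on (a x) {..<k}"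
    proof (cases x)
      case True
      show ?thesis unfolding a_def inj_on_def using True
      proof (intro ballI impI)
        fix i j assume "i \<in> {..<k}" "j \<in> {..<k}" "(if x then A1 (B0 (C i)) else C i) = (if x then A1 (B0 (C j)) else C j)"
        then show "i = j" using True injS[of i j] by (simp add: CSuc \<Phi>_def)
      qed
    next
      case False
      then show ?thesis using cinj unfolding a_def C_def by simp
    qed
  next
    fix y show "inj_on (b y) {..<k}"
    proof (cases y)
      case True
      show ?thesis unfolding b_def inj_on_def using True
      proof (intro ballI impI)
        fix i j assume ij: "i \<in> {..<k}" "j \<in> {..<k}" "(if y then B1 (A1 (B0 (C (i + k - 1)))) else B0 (C i)) = (if y then B1 (A1 (B0 (C (j + k - 1)))) else B0 (C j))"
        then have "\<Phi> (C (i + k - 1)) = \<Phi> (C (j + k - 1))" using True by (simp add: \<Phi>_def)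
        then have "C i = C j" using CSuc sub Ck by metis
        then have "i mod k = j mod k" by (rule Cinj)
        then show "i = j" using ij by simp
      qed
    next
      case False
      show ?thesis unfolding b_def inj_on_def using False
      proof (intro ballI impI)
        fix i j assume "i \<in> {..<k}" "j \<in> {..<k}" "(if y then B1 (A1 (B0 (C (i + k - 1)))) else B0 (C i)) = (if y then B1 (A1 (B0 (C (j + k - 1)))) else B0 (C j))"
        then show "i = j" using False injS[of i j] by (simp add: CSuc \<Phi>_def)
      qed
    qed
  qed
  have edges: "0 < w x y (a x j, b y ((j + of_bool (x \<and> y)) mod k))" if "j < k" for x y j
  proof (cases x; cases y)
    assume "x" "y"
    have "((j + 1) mod k + k - 1) mod k = j mod k"
    proof -
      have "((j + 1) mod k + k - 1) mod k = ((j + 1) mod k + (k - 1)) mod k" using c(2) by simp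
      also have "\<dots> = ((j + 1) + (k - 1)) mod k" by (simp add: mod_add_left_eq)
      also have "\<dots> = (j + k) mod k" using c(2) by simp
      finally show ?thesis by simp
    qed
    then have "C ((j + 1) mod k + k - 1) = C j" using Cmod by metis
    then show ?thesis using \<open>x\<close> \<open>y\<close> e11[OF CP[of j]] unfolding a_def b_def by simp
  next
    assume "x" "\<not> y"
    then show ?thesis using e10[OF CP[of j]] that unfolding a_def b_def by simp
  next
    assume "\<not> x" "y"
    have "\<Phi> (C (j + k - 1)) = C j" using CSuc[of "j + k - 1"] sub Ck by simp
    then show ?thesis using \<open>\<not> x\<close> \<open>y\<close> e01[OF CP[of "j + k - 1"]] that unfolding a_def b_def by simp
  next
    assume "\<not> x" "\<not> y"
    then show ?thesis using e00[OF CP[of j]] that unfolding a_def b_def by simp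
  qed
  show ?thesis using valid edges by blast
qed

end

definition posset :: "(real \<times> real) set \<Rightarrow> (bool \<Rightarrow> bool \<Rightarrow> real \<times> real \<Rightarrow> real) \<Rightarrow> (bool \<times> bool \<times> (real \<times> real)) set" where
  "posset S w = {t \<in> UNIV \<times> UNIV \<times> S. 0 < w (fst t) (fst (snd t)) (snd (snd t))}"

lemma core:
  assumes "nsw S w"
  shows "\<exists>(n::nat) q K A B. (\<forall>i<n. validPR (K i) (A i) (B i) \<and> 0 \<le> q i \<and>
      (\<forall>x y j. j < K i \<longrightarrow> (A i x j, B i y ((j + of_bool (x \<and> y)) mod K i)) \<in> S)) \<and>
    (\<Sum>i<n. q i) = (\<Sum>p\<in>S. w False False p) \<and>
    (\<forall>x y p. w x y p = (\<Sum>i<n. q i * prw (K i) (A i) (B i) x y p))"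
  using assms
proof (induction "card (posset S w)" arbitrary: w rule: less_induct)
  case less
  interpret nsw S w by (rule less.prems)
  show ?case
  proof (cases "\<exists>x y p. 0 < w x y p")
    case False
    have w0: "w x y p = 0" for x y p
    proof -
      have "\<not> 0 < w x y p" using False by blast
      then show ?thesis using nn[rule_format, of x y p] by linarith
    qed
    show ?thesis
      apply (rule_tac x=0 in exI)
      apply (simp add: w0)
      done
  next
    case True
    then obtain x0 y0 p0 where p0: "0 < w x0 y0 p0" by blast
    have "w x0 y0 p0 \<le> (\<Sum>p\<in>S. w x0 y0 p)"
      using fin nn inS[OF p0] by (intro member_le_sum) auto
    then have "0 < (\<Sum>p\<in>S. w False False p)" using p0 total[of x0 y0] by simp
    then obtain p1 where p1: "0 < w False False p1" using ex_pos_sum[OF fin] by blast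
    obtain k a b where valid: "validPR k a b" and
      edges: "\<And>x y j. j < k \<Longrightarrow> 0 < w x y (a x j, b y ((j + of_bool (x \<and> y)) mod k))"
      using find_PR[OF p1] by blast
    have k1: "k \<ge> 1" and ainj: "\<And>x. inj_on (a x) {..<k}" using valid unfolding validPR_def by auto
    define pt where "pt x y j = (a x j, b y ((j + of_bool (x \<and> y)) mod k))" for x y j
    have ptS: "pt x y j \<in> S" if "j < k" for x y j
      using inS[OF edges[OF that]] unfolding pt_def .
    define E where "E = (\<lambda>(x, y, j). w x y (pt x y j)) ` (UNIV \<times> UNIV \<times> {..<k})"
    have finE: "finite E" unfolding E_def by simp
    have "0 \<in> {..<k}" using k1 by simp
    then have neE: "E \<noteq> {}" unfolding E_def by blast
    define m where "m = Min E"
    have mpos: "0 < m" unfolding m_def using finE neE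
      by (subst Min_gr_iff) (auto simp: E_def pt_def edges)
    have mle: "m \<le> w x y (pt x y j)" if "j < k" for x y j
    proof -
      have "w x y (pt x y j) \<in> E" unfolding E_def using that by (intro image_eqI[where x="(x, y, j)"]) auto
      then show ?thesis unfolding m_def using finE by (rule Min_le[rotated])
    qed
    obtain x1 y1 j1 where j1: "j1 < k" and mat: "w x1 y1 (pt x1 y1 j1) = m"
    proof -
      have "m \<in> E" unfolding m_def using finE neE by (rule Min_in)
      then show ?thesis using that unfolding E_def by auto
    qed
    define L where "L = real k * m"
    have Lpos: "0 < L" unfolding L_def using mpos k1 by simp
    have prw_pt: "prw k a b x y (pt x y j0) = 1 / real k" if "j0 < k" for x y j0
    proof -
      have "prw k a b x y (pt x y j0) = (\<Sum>j<k. if j = j0 then 1 / real k else 0)"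
        unfolding prw_def
      proof (rule sum.cong[OF refl])
        fix j assume j: "j \<in> {..<k}"
        have "(pt x y j = pt x y j0) = (j = j0)"
        proof
          assume "pt x y j = pt x y j0"
          then have "a x j = a x j0" unfolding pt_def by simp
          then show "j = j0" using ainj[of x] j that unfolding inj_on_def by auto
        qed simp
        then show "(if (a x j, b y ((j + of_bool (x \<and> y)) mod k)) = pt x y j0 then 1 / real k else 0) =
              (if j = j0 then 1 / real k else 0)" unfolding pt_def by simp
      qed
      also have "\<dots> = 1 / real k" using that by simp
      finally show ?thesis .
    qed
    have prw_other: "prw k a b x y p = 0" if "\<forall>j<k. pt x y j \<noteq> p" for x y p
      unfolding prw_def using that unfolding pt_def by (intro sum.neutral) auto
    have Lle: "L * prw k a b x y p \<le> w x y p" for x y p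
    proof (cases "\<exists>j<k. pt x y j = p")
      case True
      then obtain j where j: "j < k" "pt x y j = p" by blast
      then have "L * prw k a b x y p = m" using prw_pt[OF j(1), of x y] k1 unfolding L_def by simp
      then show ?thesis using mle[OF j(1), of x y] j by simp
    next
      case False
      then show ?thesis using prw_other[of x y p] nn[rule_format, of x y p] by simp
    qed
    define w' where "w' x y p = w x y p - L * prw k a b x y p" for x y p
    have sumA: "(\<Sum>p\<in>{p\<in>S. fst p = a0}. prw k a b x y p) = (\<Sum>j<k. if a x j = a0 then 1 / real k else 0)" for x y a0
      using sum_prw[OF fin, of k a x b y "\<lambda>p. fst p = a0"] ptS unfolding pt_def by simp
    have sumB: "(\<Sum>p\<in>{p\<in>S. snd p = b0}. prw k a b x y p) = (\<Sum>j<k. if b y j = b0 then 1 / real k else 0)" for x y b0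
    proof -
      have "(\<Sum>p\<in>{p\<in>S. snd p = b0}. prw k a b x y p) =
          (\<Sum>j<k. (\<lambda>i. if b y i = b0 then 1 / real k else 0) ((j + of_bool (x \<and> y)) mod k))"
        using sum_prw[OF fin, of k a x b y "\<lambda>p. snd p = b0"] ptS unfolding pt_def by simp
      also have "\<dots> = (\<Sum>j<k. if b y j = b0 then 1 / real k else 0)"
        by (rule sum_shift_mod[OF k1])
      finally show ?thesis .
    qed
    have sumAll: "(\<Sum>p\<in>S. prw k a b x y p) = 1" for x y
    proof -
      have "(\<Sum>p\<in>S. prw k a b x y p) = (\<Sum>p\<in>{p\<in>S. True}. prw k a b x y p)" by simp
      also have "\<dots> = (\<Sum>j<k. 1 / real k)"
        using sum_prw[OF fin, of k a x b y "\<lambda>p. True"] ptS unfolding pt_def by simp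
      also have "\<dots> = 1" using k1 by simp
      finally show ?thesis .
    qed
    have nsw': "nsw S w'"
    proof
      show "finite S" by (rule fin)
      show "\<forall>x y p. 0 \<le> w' x y p" unfolding w'_def using Lle by simp
      show "\<forall>x y p. p \<notin> S \<longrightarrow> w' x y p = 0"
      proof (intro allI impI)
        fix x y p assume "p \<notin> S"
        then have "\<forall>j<k. pt x y j \<noteq> p" using ptS by blast
        then show "w' x y p = 0" unfolding w'_def using prw_other[of x y p] z[rule_format, of p x y] \<open>p \<notin> S\<close> by simp
      qed
      show "\<forall>x a0. (\<Sum>p\<in>{p\<in>S. fst p = a0}. w' x False p) = (\<Sum>p\<in>{p\<in>S. fst p = a0}. w' x True p)"
        unfolding w'_def by (simp add: sum_subtractf sum_distrib_left[symmetric] sumA na)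
      show "\<forall>y b0. (\<Sum>p\<in>{p\<in>S. snd p = b0}. w' False y p) = (\<Sum>p\<in>{p\<in>S. snd p = b0}. w' True y p)"
        unfolding w'_def by (simp add: sum_subtractf sum_distrib_left[symmetric] sumB nb)
    qed
    have finpos: "finite (posset S w)" unfolding posset_def using fin by simp
    have sub: "posset S w' \<subset> posset S w"
    proof
      show "posset S w' \<subseteq> posset S w"
      proof
        fix t assume t: "t \<in> posset S w'"
        have "0 \<le> L * prw k a b (fst t) (fst (snd t)) (snd (snd t))"
          using Lpos prw_nonneg by simp
        then show "t \<in> posset S w" using t unfolding posset_def w'_def by auto
      qed
      have "(x1, y1, pt x1 y1 j1) \<in> posset S w" unfolding posset_def using ptS[OF j1] mat mpos by simp
      moreover have "(x1, y1, pt x1 y1 j1) \<notin> posset S w'"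
        unfolding posset_def w'_def using prw_pt[OF j1, of x1 y1] mat k1 unfolding L_def by simp
      ultimately show "posset S w' \<noteq> posset S w" by blast
    qed
    have "card (posset S w') < card (posset S w)" using psubset_card_mono[OF finpos sub] .
    from less.hyps[OF this nsw'] obtain n :: nat and q K A B where
      IH1: "\<forall>i<n. validPR (K i) (A i) (B i) \<and> 0 \<le> q i \<and>
        (\<forall>x y j. j < K i \<longrightarrow> (A i x j, B i y ((j + of_bool (x \<and> y)) mod K i)) \<in> S)" and
      IH2: "(\<Sum>i<n. q i) = (\<Sum>p\<in>S. w' False False p)" and
      IH3: "\<forall>x y p. w' x y p = (\<Sum>i<n. q i * prw (K i) (A i) (B i) x y p)" by blast
    define q2 where "q2 = q(n := L)"
    define K2 where "K2 = K(n := k)"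
    define A2 where "A2 = A(n := a)"
    define B2 where "B2 = B(n := b)"
    have G1: "\<forall>i<Suc n. validPR (K2 i) (A2 i) (B2 i) \<and> 0 \<le> q2 i \<and>
        (\<forall>x y j. j < K2 i \<longrightarrow> (A2 i x j, B2 i y ((j + of_bool (x \<and> y)) mod K2 i)) \<in> S)"
    proof (intro allI impI)
      fix i assume "i < Suc n"
      then consider "i < n" | "i = n" by linarith
      then show "validPR (K2 i) (A2 i) (B2 i) \<and> 0 \<le> q2 i \<and>
        (\<forall>x y j. j < K2 i \<longrightarrow> (A2 i x j, B2 i y ((j + of_bool (x \<and> y)) mod K2 i)) \<in> S)"
      proof cases
        case 1
        then show ?thesis using IH1 unfolding q2_def K2_def A2_def B2_def by simp
      next
        case 2
        then show ?thesis using valid Lpos ptS unfolding q2_def K2_def A2_def B2_def pt_def by simp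
      qed
    qed
    have G2: "(\<Sum>i<Suc n. q2 i) = (\<Sum>p\<in>S. w False False p)"
    proof -
      have "(\<Sum>i<Suc n. q2 i) = (\<Sum>i<n. q i) + L"
        unfolding q2_def by simp
      also have "\<dots> = (\<Sum>p\<in>S. w' False False p) + L" using IH2 by simp
      also have "\<dots> = (\<Sum>p\<in>S. w False False p)"
        unfolding w'_def by (simp add: sum_subtractf sum_distrib_left[symmetric] sumAll)
      finally show ?thesis .
    qed
    have G3: "\<forall>x y p. w x y p = (\<Sum>i<Suc n. q2 i * prw (K2 i) (A2 i) (B2 i) x y p)"
    proof (intro allI)
      fix x y p
      have "w x y p = w' x y p + L * prw k a b x y p" unfolding w'_def by simp
      also have "\<dots> = (\<Sum>i<n. q i * prw (K i) (A i) (B i) x y p) + L * prw k a b x y p"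
        using IH3[rule_format, of x y p] by simp
      also have "\<dots> = (\<Sum>i<Suc n. q2 i * prw (K2 i) (A2 i) (B2 i) x y p)"
        unfolding q2_def K2_def A2_def B2_def by simp
      finally show "w x y p = (\<Sum>i<Suc n. q2 i * prw (K2 i) (A2 i) (B2 i) x y p)" .
    qed
    show ?thesis
      by (rule exI[of _ "Suc n"], rule exI[of _ q2], rule exI[of _ K2], rule exI[of _ A2], rule exI[of _ B2])
        (intro conjI G1 G2 G3)
  qed
qed



lemma suminf_sum_ennreal:
  fixes f :: "'i \<Rightarrow> nat \<Rightarrow> ennreal"
  assumes "finite I"
  shows "(\<Sum>n. \<Sum>i\<in>I. f i n) = (\<Sum>i\<in>I. \<Sum>n. f i n)"
  using assms
proof (induction I rule: finite_induct)
  case (insert a F)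
  have "(\<Sum>n. \<Sum>i\<in>insert a F. f i n) = (\<Sum>n. f a n + (\<Sum>i\<in>F. f i n))"
    using insert by simp
  also have "\<dots> = (\<Sum>n. f a n) + (\<Sum>n. \<Sum>i\<in>F. f i n)"
    by (rule suminf_add[symmetric]) (auto intro: summableI)
  finally show ?case using insert by simp
qed simp

lemma sets_mixture[simp]: "sets (mixture q M I) = sets (borel :: (real \<times> real) measure)"
  unfolding mixture_def
  by (subst sets_measure_of) (auto simp: sets.sigma_sets_eq[of borel, simplified])

lemma space_mixture[simp]: "space (mixture q M I) = UNIV"
  unfolding mixture_def by (simp add: space_measure_of_conv)

lemma emeasure_mixture:
  assumes "finite I" "\<And>i. i \<in> I \<Longrightarrow> 0 \<le> q i" "\<And>i. i \<in> I \<Longrightarrow> sets (M i) = sets borel"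
    and A: "A \<in> sets borel"
  shows "emeasure (mixture q M I) A = (\<Sum>i\<in>I. ennreal (q i) * emeasure (M i) A)"
  unfolding mixture_def
proof (rule emeasure_measure_of_sigma)
  show "sigma_algebra UNIV (sets (borel :: (real \<times> real) measure))"
    using sets.sigma_algebra_axioms[of borel] by simp
  show "positive (sets borel) (\<lambda>A. \<Sum>i\<in>I. ennreal (q i) * emeasure (M i) A)"
    unfolding positive_def by simp
  show "countably_additive (sets borel) (\<lambda>A. \<Sum>i\<in>I. ennreal (q i) * emeasure (M i) A)"
    unfolding countably_additive_def
  proof (intro allI impI)
    fix F :: "nat \<Rightarrow> (real \<times> real) set"
    assume F: "range F \<subseteq> sets borel" "disjoint_family F" "\<Union> (range F) \<in> sets borel"
    have "(\<Sum>n. \<Sum>i\<in>I. ennreal (q i) * emeasure (M i) (F n)) =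
        (\<Sum>i\<in>I. \<Sum>n. ennreal (q i) * emeasure (M i) (F n))"
      by (rule suminf_sum_ennreal[OF assms(1)])
    also have "\<dots> = (\<Sum>i\<in>I. ennreal (q i) * emeasure (M i) (\<Union> (range F)))"
    proof (rule sum.cong[OF refl])
      fix i assume "i \<in> I"
      then have "range F \<subseteq> sets (M i)" using F assms(3) by simp
      then show "(\<Sum>n. ennreal (q i) * emeasure (M i) (F n)) = ennreal (q i) * emeasure (M i) (\<Union> (range F))"
        using F(2) by (simp add: suminf_emeasure)
    qed
    finally show "(\<Sum>n. \<Sum>i\<in>I. ennreal (q i) * emeasure (M i) (F n)) =
        (\<Sum>i\<in>I. ennreal (q i) * emeasure (M i) (\<Union> (range F)))" .
  qed
  show "A \<in> sets borel" by (rule A)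
qed

lemma emeasure_PRmix:
  assumes "A \<in> sets borel"
  shows "emeasure (mixture (\<lambda>_. 1 / real k) (\<lambda>j. return borel (P j)) {..<k}) A =
    (\<Sum>j<k. ennreal (1 / real k) * indicator A (P j))"
  using assms by (subst emeasure_mixture) auto

lemma prod_UNIV_borel: "A \<in> sets borel \<Longrightarrow> A \<times> (UNIV :: real set) \<in> sets (borel :: (real \<times> real) measure)"
  by (metis borel_prod pair_measureI sets.top space_borel)

lemma UNIV_prod_borel: "B \<in> sets borel \<Longrightarrow> (UNIV :: real set) \<times> B \<in> sets (borel :: (real \<times> real) measure)"
  by (metis borel_prod pair_measureI sets.top space_borel)

lemma PR_margA:
  assumes "PR_box \<mu>" "A \<in> sets borel"
  shows "emeasure (\<mu> x False) (A \<times> UNIV) = emeasure (\<mu> x True) (A \<times> UNIV)"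
proof -
  obtain k a b where \<mu>: "\<mu> = (\<lambda>x y. mixture (\<lambda>_. 1 / real k)
                 (\<lambda>j. return borel (a x j, b y ((j + of_bool (x \<and> y)) mod k))) {..<k})"
    using assms(1) unfolding PR_box_def by blast
  show ?thesis unfolding \<mu> using prod_UNIV_borel[OF assms(2)]
    by (simp add: emeasure_PRmix indicator_def)
qed

lemma PR_margB:
  assumes "PR_box \<mu>" "B \<in> sets borel"
  shows "emeasure (\<mu> False y) (UNIV \<times> B) = emeasure (\<mu> True y) (UNIV \<times> B)"
proof -
  obtain k a b where k: "k \<ge> 1" and \<mu>: "\<mu> = (\<lambda>x y. mixture (\<lambda>_. 1 / real k)
                 (\<lambda>j. return borel (a x j, b y ((j + of_bool (x \<and> y)) mod k))) {..<k})"
    using assms(1) unfolding PR_box_def by blast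
  have "emeasure (\<mu> x y) (UNIV \<times> B) = (\<Sum>j<k. ennreal (1 / real k) * indicator B (b y j))" for x
  proof -
    have "emeasure (\<mu> x y) (UNIV \<times> B) =
      (\<Sum>j<k. (\<lambda>i. ennreal (1 / real k) * indicator B (b y i)) ((j + of_bool (x \<and> y)) mod k))"
      unfolding \<mu> using UNIV_prod_borel[OF assms(2)]
      by (simp add: emeasure_PRmix indicator_def)
    also have "\<dots> = (\<Sum>j<k. ennreal (1 / real k) * indicator B (b y j))"
      by (rule sum_shift_mod[OF k])
    finally show ?thesis .
  qed
  then show ?thesis by simp
qed

lemma Conv_PR_props:
  assumes "\<nu> \<in> Conv_PR"
  shows "sets (\<nu> x y) = sets borel"
    and "A \<in> sets borel \<Longrightarrow> emeasure (\<nu> x False) (A \<times> UNIV) = emeasure (\<nu> x True) (A \<times> UNIV)"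
    and "B \<in> sets borel \<Longrightarrow> emeasure (\<nu> False y) (UNIV \<times> B) = emeasure (\<nu> True y) (UNIV \<times> B)"
proof -
  obtain n :: nat and q \<mu>s where H: "\<forall>i<n. PR_box (\<mu>s i) \<and> q i \<ge> 0"
    and \<nu>: "\<nu> = (\<lambda>x y. mixture q (\<lambda>i. \<mu>s i x y) {..<n})"
    using assms unfolding Conv_PR_def by blast
  have setsPR: "sets (\<mu>s i x y) = sets borel" if iN: "i < n" for i x y
  proof -
    obtain k a b where "\<mu>s i = (\<lambda>x y. mixture (\<lambda>_. 1 / real k)
                 (\<lambda>j. return borel (a x j, b y ((j + of_bool (x \<and> y)) mod k))) {..<k})"
    proof -
      have "PR_box (\<mu>s i)" using H iN by blast
      then show ?thesis using that unfolding PR_box_def by blast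
    qed
    then show ?thesis by simp
  qed
  show "sets (\<nu> x y) = sets borel" unfolding \<nu> by simp
  show "emeasure (\<nu> x False) (A \<times> UNIV) = emeasure (\<nu> x True) (A \<times> UNIV)" if A: "A \<in> sets borel"
  proof -
    have "emeasure (mixture q (\<lambda>i. \<mu>s i x y) {..<n}) (A \<times> UNIV) =
        (\<Sum>i<n. ennreal (q i) * emeasure (\<mu>s i x y) (A \<times> UNIV))" for y
      using H setsPR prod_UNIV_borel[OF A] by (intro emeasure_mixture) auto
    moreover have "(\<Sum>i<n. ennreal (q i) * emeasure (\<mu>s i x False) (A \<times> UNIV)) =
        (\<Sum>i<n. ennreal (q i) * emeasure (\<mu>s i x True) (A \<times> UNIV))"
      using H PR_margA[OF _ A] by (intro sum.cong) auto
    ultimately show ?thesis unfolding \<nu> by simp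
  qed
  show "emeasure (\<nu> False y) (UNIV \<times> B) = emeasure (\<nu> True y) (UNIV \<times> B)" if B: "B \<in> sets borel"
  proof -
    have "emeasure (mixture q (\<lambda>i. \<mu>s i x y) {..<n}) (UNIV \<times> B) =
        (\<Sum>i<n. ennreal (q i) * emeasure (\<mu>s i x y) (UNIV \<times> B))" for x
      using H setsPR UNIV_prod_borel[OF B] by (intro emeasure_mixture) auto
    moreover have "(\<Sum>i<n. ennreal (q i) * emeasure (\<mu>s i False y) (UNIV \<times> B)) =
        (\<Sum>i<n. ennreal (q i) * emeasure (\<mu>s i True y) (UNIV \<times> B))"
      using H PR_margB[OF _ B] by (intro sum.cong) auto
    ultimately show ?thesis unfolding \<nu> by simp
  qed
qed



lemma iexp_split: "iexp (t * x) = complex_of_real (cos (t * x)) + \<i> * complex_of_real (sin (t * x))"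
  unfolding cis_conv_exp[symmetric] by (simp add: complex_eq_iff)

lemma char_split:
  assumes "real_distribution M"
  shows "char M t = complex_of_real (integral\<^sup>L M (\<lambda>x. cos (t * x))) + \<i> * complex_of_real (integral\<^sup>L M (\<lambda>x. sin (t * x)))"
proof -
  interpret real_distribution M by fact
  have ic: "integrable M (\<lambda>x. complex_of_real (cos (t * x)))"
    by (rule integrable_const_bound[where B=1]) auto
  have isn: "integrable M (\<lambda>x. \<i> * complex_of_real (sin (t * x)))"
    by (rule integrable_const_bound[where B=1]) (auto simp: norm_mult)
  have "char M t = (CLINT x|M. complex_of_real (cos (t * x)) + \<i> * complex_of_real (sin (t * x)))"
    unfolding char_def iexp_split ..
  also have "\<dots> = (CLINT x|M. complex_of_real (cos (t * x))) + (CLINT x|M. \<i> * complex_of_real (sin (t * x)))"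
    by (rule Bochner_Integration.integral_add[OF ic isn])
  also have "\<dots> = complex_of_real (integral\<^sup>L M (\<lambda>x. cos (t * x))) + \<i> * complex_of_real (integral\<^sup>L M (\<lambda>x. sin (t * x)))"
    by simp
  finally show ?thesis .
qed

lemma bc_integral_unique:
  fixes M1 M2 :: "real measure"
  assumes "real_distribution M1" "real_distribution M2"
    and eq: "\<And>g :: real \<Rightarrow> real. continuous_on UNIV g \<Longrightarrow> bounded (range g) \<Longrightarrow> integral\<^sup>L M1 g = integral\<^sup>L M2 g"
  shows "M1 = M2"
proof (rule Levy_uniqueness[OF assms(1,2)])
  have bc: "bounded (range (\<lambda>x. cos (t * x)))" "bounded (range (\<lambda>x. sin (t * x)))" for t :: real
    unfolding bounded_iff by (auto intro!: exI[of _ 1])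
  have cc: "continuous_on UNIV (\<lambda>x. cos (t * x))" "continuous_on UNIV (\<lambda>x. sin (t * x))" for t :: real
    by (intro continuous_intros)+
  show "char M1 = char M2"
    by (rule ext) (simp add: char_split[OF assms(1)] char_split[OF assms(2)] eq[OF cc(1) bc(1)] eq[OF cc(2) bc(2)])
qed

lemma meas_cong_borel:
  assumes "sets M = sets borel" "f \<in> borel_measurable borel"
  shows "f \<in> borel_measurable M"
  by (subst measurable_cong_sets[OF assms(1) refl]) (rule assms(2))

lemma real_distr_intro:
  assumes "prob_space M" "sets M = sets borel" "continuous_on UNIV (\<pi> :: real \<times> real \<Rightarrow> real)"
  shows "real_distribution (distr M borel \<pi>)"
proof (rule real_distribution.intro)
  show "prob_space (distr M borel \<pi>)"
    by (rule prob_space.prob_space_distr[OF assms(1) meas_cong_borel[OF assms(2) borel_measurable_continuous_onI[OF assms(3)]]])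
  show "real_distribution_axioms (distr M borel \<pi>)"
    by (simp add: real_distribution_axioms_def)
qed

lemma marg_eq:
  fixes \<pi> :: "real \<times> real \<Rightarrow> real"
  assumes c\<pi>: "continuous_on UNIV \<pi>"
    and M: "prob_space M1" "sets M1 = sets borel" "prob_space M2" "sets M2 = sets borel"
    and N: "\<And>n. sets (N1 n) = sets borel" "\<And>n. sets (N2 n) = sets borel"
    and D: "\<And>n. distr (N1 n) borel \<pi> = distr (N2 n) borel \<pi>"
    and W: "weak_conv_plane N1 M1" "weak_conv_plane N2 M2"
  shows "distr M1 borel \<pi> = distr M2 borel \<pi>"
proof (rule bc_integral_unique)
  have \<pi>m: "\<pi> \<in> borel_measurable borel" using c\<pi> by (rule borel_measurable_continuous_onI)
  show "real_distribution (distr M1 borel \<pi>)" by (rule real_distr_intro[OF M(1,2) c\<pi>])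
  show "real_distribution (distr M2 borel \<pi>)" by (rule real_distr_intro[OF M(3,4) c\<pi>])
  fix g :: "real \<Rightarrow> real" assume g: "continuous_on UNIV g" "bounded (range g)"
  have gm: "g \<in> borel_measurable borel" using g(1) by (rule borel_measurable_continuous_onI)
  have int: "integral\<^sup>L (distr M borel \<pi>) g = integral\<^sup>L M (\<lambda>p. g (\<pi> p))" if "sets M = sets borel" for M
    by (rule integral_distr[OF meas_cong_borel[OF that \<pi>m] gm])
  have gc: "continuous_on UNIV (\<lambda>p. g (\<pi> p))"
    using continuous_on_compose[OF c\<pi> continuous_on_subset[OF g(1)]] by (simp add: o_def)
  have gb: "bounded (range (\<lambda>p. g (\<pi> p)))"
    by (rule bounded_subset[OF g(2)]) auto
  have l1: "(\<lambda>n. integral\<^sup>L (N1 n) (\<lambda>p. g (\<pi> p))) \<longlonglongrightarrow> integral\<^sup>L M1 (\<lambda>p. g (\<pi> p))"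
    using W(1) gc gb unfolding weak_conv_plane_def by blast
  have l2: "(\<lambda>n. integral\<^sup>L (N2 n) (\<lambda>p. g (\<pi> p))) \<longlonglongrightarrow> integral\<^sup>L M2 (\<lambda>p. g (\<pi> p))"
    using W(2) gc gb unfolding weak_conv_plane_def by blast
  have "integral\<^sup>L (N1 n) (\<lambda>p. g (\<pi> p)) = integral\<^sup>L (N2 n) (\<lambda>p. g (\<pi> p))" for n
    using int[OF N(1)[of n]] int[OF N(2)[of n]] D[of n] by simp
  then have "integral\<^sup>L M1 (\<lambda>p. g (\<pi> p)) = integral\<^sup>L M2 (\<lambda>p. g (\<pi> p))"
    using l1 l2 LIMSEQ_unique by simp
  then show "integral\<^sup>L (distr M1 borel \<pi>) g = integral\<^sup>L (distr M2 borel \<pi>) g"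
    using int[OF M(2)] int[OF M(4)] by simp
qed

lemma emeasure_distr_fst:
  assumes "sets M = sets (borel :: (real \<times> real) measure)" "A \<in> sets (borel :: real measure)"
  shows "emeasure (distr M borel fst) A = emeasure M (A \<times> UNIV)"
proof -
  have "space M = UNIV" using sets_eq_imp_space_eq[OF assms(1)] by simp
  then show ?thesis
    using emeasure_distr[OF meas_cong_borel[OF assms(1) borel_measurable_continuous_onI[OF continuous_on_fst[OF continuous_on_id]]] assms(2)]
    by (simp add: vimage_fst)
qed

lemma emeasure_distr_snd:
  assumes "sets M = sets (borel :: (real \<times> real) measure)" "A \<in> sets (borel :: real measure)"
  shows "emeasure (distr M borel snd) A = emeasure M (UNIV \<times> A)"
proof -
  have "space M = UNIV" using sets_eq_imp_space_eq[OF assms(1)] by simp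
  then show ?thesis
    using emeasure_distr[OF meas_cong_borel[OF assms(1) borel_measurable_continuous_onI[OF continuous_on_snd[OF continuous_on_id]]] assms(2)]
    by (simp add: vimage_snd)
qed

lemma limit_NS:
  assumes beh: "is_behaviour \<mu>" and s: "\<forall>n. s n \<in> Conv_PR"
    and W: "\<forall>x y. weak_conv_plane (\<lambda>n. s n x y) (\<mu> x y)"
  shows "no_signaling \<mu>"
proof -
  have B: "prob_space (\<mu> x y)" "sets (\<mu> x y) = sets borel" for x y
    using beh unfolding is_behaviour_def by auto
  have sN: "sets (s n x y) = sets borel" for n x y using Conv_PR_props(1)[OF s[rule_format]] .
  have cf: "continuous_on UNIV (fst :: real \<times> real \<Rightarrow> real)" "continuous_on UNIV (snd :: real \<times> real \<Rightarrow> real)"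
    by (intro continuous_intros)+
  have A: "emeasure (\<mu> x False) (A \<times> UNIV) = emeasure (\<mu> x True) (A \<times> UNIV)"
    if A: "A \<in> sets borel" for x A
  proof -
    have "distr (\<mu> x False) borel fst = distr (\<mu> x True) borel fst"
    proof (rule marg_eq[OF cf(1) B(1) B(2) B(1) B(2) sN sN _ W[rule_format] W[rule_format]])
      fix n
      show "distr (s n x False) borel fst = distr (s n x True) borel fst"
      proof (rule measure_eqI)
        show "sets (distr (s n x False) borel fst) = sets (distr (s n x True) borel fst)" by simp
        fix C assume "C \<in> sets (distr (s n x False) borel fst)"
        then have C: "C \<in> sets borel" by simp
        show "emeasure (distr (s n x False) borel fst) C = emeasure (distr (s n x True) borel fst) C"
          using emeasure_distr_fst[OF sN C] Conv_PR_props(2)[OF s[rule_format] C] by simp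
      qed
    qed
    then show ?thesis using emeasure_distr_fst[OF B(2) A] by metis
  qed
  have Bb: "emeasure (\<mu> False y) (UNIV \<times> C) = emeasure (\<mu> True y) (UNIV \<times> C)"
    if C: "C \<in> sets borel" for y C
  proof -
    have "distr (\<mu> False y) borel snd = distr (\<mu> True y) borel snd"
    proof (rule marg_eq[OF cf(2) B(1) B(2) B(1) B(2) sN sN _ W[rule_format] W[rule_format]])
      fix n
      show "distr (s n False y) borel snd = distr (s n True y) borel snd"
      proof (rule measure_eqI)
        show "sets (distr (s n False y) borel snd) = sets (distr (s n True y) borel snd)" by simp
        fix D assume "D \<in> sets (distr (s n False y) borel snd)"
        then have D: "D \<in> sets borel" by simp
        show "emeasure (distr (s n False y) borel snd) D = emeasure (distr (s n True y) borel snd) D"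
          using emeasure_distr_snd[OF sN D] Conv_PR_props(3)[OF s[rule_format] D] by simp
      qed
    qed
    then show ?thesis using emeasure_distr_snd[OF B(2) C] by metis
  qed
  show ?thesis unfolding no_signaling_def using beh A Bb by blast
qed



definition hq :: "nat \<Rightarrow> real \<Rightarrow> real" where
  "hq n t = real_of_int \<lfloor>max (- real n) (min (real n) t) * real (Suc n)\<rfloor> / real (Suc n)"

definition Hq :: "nat \<Rightarrow> real \<times> real \<Rightarrow> real \<times> real" where
  "Hq n p = (hq n (fst p), hq n (snd p))"

lemma hq_meas: "hq n \<in> borel_measurable borel"
  unfolding hq_def by measurable

lemma Hq_meas: "Hq n \<in> borel_measurable borel"
proof -
  have "(\<lambda>p. (hq n (fst p), hq n (snd p))) \<in> borel_measurable (borel \<Otimes>\<^sub>M borel)"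
    using hq_meas by measurable
  then show ?thesis unfolding Hq_def borel_prod .
qed

lemma hq_range: "range (hq n) \<subseteq> (\<lambda>i. real_of_int i / real (Suc n)) ` {- (int n * int (Suc n)) .. int n * int (Suc n)}"
proof
  fix v assume "v \<in> range (hq n)"
  then obtain t where v: "v = hq n t" by blast
  define c where "c = max (- real n) (min (real n) t)"
  have c1: "- real n \<le> c" "c \<le> real n" unfolding c_def by auto
  have "- (real n * real (Suc n)) \<le> c * real (Suc n)" using mult_right_mono[OF c1(1), of "real (Suc n)"] by simp
  then have lo: "- (int n * int (Suc n)) \<le> \<lfloor>c * real (Suc n)\<rfloor>"
    by (simp add: le_floor_iff)
  have "c * real (Suc n) \<le> real n * real (Suc n)" using mult_right_mono[OF c1(2), of "real (Suc n)"] by simp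
  then have "\<lfloor>c * real (Suc n)\<rfloor> \<le> \<lfloor>real n * real (Suc n)\<rfloor>" by (rule floor_mono)
  moreover have "real n * real (Suc n) = real_of_int (int n * int (Suc n))" by simp
  ultimately have hi: "\<lfloor>c * real (Suc n)\<rfloor> \<le> int n * int (Suc n)"
    by (metis floor_of_int)
  show "v \<in> (\<lambda>i. real_of_int i / real (Suc n)) ` {- (int n * int (Suc n)) .. int n * int (Suc n)}"
    using lo hi unfolding v hq_def c_def[symmetric] by auto
qed

lemma hq_finite: "finite (range (hq n))"
  by (rule finite_subset[OF hq_range]) auto

lemma hq_lim: "(\<lambda>n. hq n t) \<longlonglongrightarrow> t"
proof (rule tendsto_sandwich[of "\<lambda>n. t - 1 / real (Suc n)" _ _ "\<lambda>n. t"])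
  have ev: "eventually (\<lambda>n. \<bar>t\<bar> \<le> real n) sequentially"
    unfolding eventually_sequentially
    by (intro exI[of _ "nat \<lceil>\<bar>t\<bar>\<rceil>"]) (metis le_nat_iff less_eq_real_def of_int_ceiling_le_add_one of_nat_le_iff real_nat_ceiling_ge order_trans)
  have eq: "hq n t = real_of_int \<lfloor>t * real (Suc n)\<rfloor> / real (Suc n)" if "\<bar>t\<bar> \<le> real n" for n
  proof -
    have "max (- real n) (min (real n) t) = t" using that by auto
    then show ?thesis unfolding hq_def by simp
  qed
  show "eventually (\<lambda>n. t - 1 / real (Suc n) \<le> hq n t) sequentially"
    using ev
  proof eventually_elim
    case (elim n)
    have "t * real (Suc n) - 1 \<le> real_of_int \<lfloor>t * real (Suc n)\<rfloor>" by linarith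
    then have "(t * real (Suc n) - 1) / real (Suc n) \<le> real_of_int \<lfloor>t * real (Suc n)\<rfloor> / real (Suc n)"
      by (intro divide_right_mono) auto
    moreover have "(t * real (Suc n) - 1) / real (Suc n) = t - 1 / real (Suc n)"
      by (simp add: field_simps)
    ultimately show ?case using eq[OF elim] by simp
  qed
  show "eventually (\<lambda>n. hq n t \<le> t) sequentially"
    using ev
  proof eventually_elim
    case (elim n)
    have "real_of_int \<lfloor>t * real (Suc n)\<rfloor> \<le> t * real (Suc n)" by linarith
    then have "real_of_int \<lfloor>t * real (Suc n)\<rfloor> / real (Suc n) \<le> t * real (Suc n) / real (Suc n)"
      by (intro divide_right_mono) auto
    then show ?case using eq[OF elim] by simp
  qed
  have "(\<lambda>n. 1 / real (Suc n)) \<longlonglongrightarrow> 0" using LIMSEQ_inverse_real_of_nat by (simp add: inverse_eq_divide)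
  then show "(\<lambda>n. t - 1 / real (Suc n)) \<longlonglongrightarrow> t"
    using tendsto_diff[OF tendsto_const[of t]] by fastforce
qed simp

lemma Hq_lim: "(\<lambda>n. Hq n p) \<longlonglongrightarrow> p"
  unfolding Hq_def using tendsto_Pair[OF hq_lim[of "fst p"] hq_lim[of "snd p"]] by simp

lemma weak_conv_Hq:
  assumes "prob_space M" "sets M = sets (borel :: (real \<times> real) measure)"
  shows "weak_conv_plane (\<lambda>n. distr M borel (Hq n)) M"
  unfolding weak_conv_plane_def
proof (intro allI impI)
  interpret prob_space M by fact
  fix f :: "real \<times> real \<Rightarrow> real" assume f: "continuous_on UNIV f \<and> bounded (range f)"
  obtain B where B: "\<And>x. \<bar>f x\<bar> \<le> B" using f unfolding bounded_iff by auto
  have fm: "f \<in> borel_measurable borel" using f borel_measurable_continuous_onI by blast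
  have Hm: "Hq n \<in> measurable M borel" for n by (rule meas_cong_borel[OF assms(2) Hq_meas])
  have "integral\<^sup>L (distr M borel (Hq n)) f = integral\<^sup>L M (\<lambda>p. f (Hq n p))" for n
    by (rule integral_distr[OF Hm fm])
  moreover have "(\<lambda>n. integral\<^sup>L M (\<lambda>p. f (Hq n p))) \<longlonglongrightarrow> integral\<^sup>L M f"
  proof (rule integral_dominated_convergence[where w="\<lambda>_. B"])
    show "f \<in> borel_measurable M" by (rule meas_cong_borel[OF assms(2) fm])
    show "(\<lambda>p. f (Hq n p)) \<in> borel_measurable M" for n
      using measurable_comp[OF Hm fm] by (simp add: o_def)
    show "integrable M (\<lambda>_. B)" by simp
    show "AE x in M. (\<lambda>n. f (Hq n x)) \<longlonglongrightarrow> f x"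
    proof (rule AE_I2)
      fix x
      have "isCont f x" using f by (meson UNIV_I continuous_on_eq_continuous_at open_UNIV)
      then show "(\<lambda>n. f (Hq n x)) \<longlonglongrightarrow> f x" using isCont_tendsto_compose Hq_lim by blast
    qed
    show "AE x in M. norm (f (Hq n x)) \<le> B" for n using B by simp
  qed
  ultimately show "(\<lambda>n. integral\<^sup>L (distr M borel (Hq n)) f) \<longlonglongrightarrow> integral\<^sup>L M f" by simp
qed

lemma finite_borel: "finite (T :: (real \<times> real) set) \<Longrightarrow> T \<in> sets borel"
  by (intro borel_closed finite_imp_closed)

lemma ennreal_PRsum:
  "(\<Sum>j<k. ennreal (1 / real k) * indicator C (P j)) = ennreal (\<Sum>j<k. if P j \<in> C then 1 / real k else 0)"
proof -
  have "(\<Sum>j<k. ennreal (1 / real k) * indicator C (P j)) = (\<Sum>j<k. ennreal (if P j \<in> C then 1 / real k else 0))"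
    by (rule sum.cong) (auto simp: indicator_def)
  also have "\<dots> = ennreal (\<Sum>j<k. if P j \<in> C then 1 / real k else 0)"
    by (rule sum_ennreal) simp
  finally show ?thesis .
qed

lemma conv_of_NS:
  assumes NS: "no_signaling \<mu>"
  shows "(\<lambda>x y. distr (\<mu> x y) borel (Hq n)) \<in> Conv_PR"
proof -
  have B: "prob_space (\<mu> x y)" "sets (\<mu> x y) = sets borel" for x y
    using NS unfolding no_signaling_def is_behaviour_def by auto
  have spB: "space (\<mu> x y) = UNIV" for x y using sets_eq_imp_space_eq[OF B(2)] by simp
  have Hm: "Hq n \<in> measurable (\<mu> x y) borel" for x y by (rule meas_cong_borel[OF B(2) Hq_meas])
  define \<nu> where "\<nu> x y = distr (\<mu> x y) borel (Hq n)" for x y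
  have P\<nu>: "prob_space (\<nu> x y)" for x y unfolding \<nu>_def by (rule prob_space.prob_space_distr[OF B(1) Hm])
  have S\<nu>: "sets (\<nu> x y) = sets borel" for x y unfolding \<nu>_def by simp
  define S where "S = range (hq n) \<times> range (hq n)"
  have finS: "finite S" unfolding S_def using hq_finite by simp
  have HS: "Hq n p \<in> S" for p unfolding S_def Hq_def by auto
  define w where "w x y p = measure (\<nu> x y) {p}" for x y p
  have mdist: "measure (\<nu> x y) T = measure (\<mu> x y) (Hq n -` T)" if "T \<in> sets borel" for x y T
    unfolding \<nu>_def using measure_distr[OF Hm that] spB by simp
  have sumT: "(\<Sum>p\<in>T. w x y p) = measure (\<nu> x y) T" if "finite T" for x y T
  proof -
    interpret prob_space "\<nu> x y" by (rule P\<nu>)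
    show ?thesis unfolding w_def
      by (rule finite_measure_eq_sum_singleton[symmetric]) (use that S\<nu> in auto)
  qed
  have preA: "Hq n -` {p\<in>S. fst p = a} = (hq n -` {a}) \<times> UNIV" for a
    using HS unfolding Hq_def by auto
  have preB: "Hq n -` {p\<in>S. snd p = b} = UNIV \<times> (hq n -` {b})" for b
    using HS unfolding Hq_def by auto
  have hqs: "hq n -` {a} \<in> sets borel" for a
    using measurable_sets[OF hq_meas, of "{a}"] by simp
  have nsw: "nsw S w"
  proof
    show "finite S" by (rule finS)
    show "\<forall>x y p. 0 \<le> w x y p" unfolding w_def by simp
    show "\<forall>x y p. p \<notin> S \<longrightarrow> w x y p = 0"
    proof (intro allI impI)
      fix x y p assume "p \<notin> S"
      have "Hq n -` {p} = {}"
      proof (rule equals0I)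
        fix r assume "r \<in> Hq n -` {p}"
        then have "Hq n r = p" by simp
        then show False using HS[of r] \<open>p \<notin> S\<close> by simp
      qed
      then show "w x y p = 0" unfolding w_def using mdist[of "{p}" x y] by simp
    qed
    show "\<forall>x a. (\<Sum>p\<in>{p\<in>S. fst p = a}. w x False p) = (\<Sum>p\<in>{p\<in>S. fst p = a}. w x True p)"
    proof (intro allI)
      fix x a
      have e: "emeasure (\<mu> x False) ((hq n -` {a}) \<times> UNIV) = emeasure (\<mu> x True) ((hq n -` {a}) \<times> UNIV)"
        using NS hqs unfolding no_signaling_def by blast
      have "(\<Sum>p\<in>{p\<in>S. fst p = a}. w x y p) = measure (\<mu> x y) ((hq n -` {a}) \<times> UNIV)" for y
        using sumT[of "{p\<in>S. fst p = a}" x y] finS mdist[of "{p\<in>S. fst p = a}" x y] finite_borel[of "{p\<in>S. fst p = a}"] preA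
        by simp
      then show "(\<Sum>p\<in>{p\<in>S. fst p = a}. w x False p) = (\<Sum>p\<in>{p\<in>S. fst p = a}. w x True p)"
        using e by (simp add: measure_def)
    qed
    show "\<forall>y b. (\<Sum>p\<in>{p\<in>S. snd p = b}. w False y p) = (\<Sum>p\<in>{p\<in>S. snd p = b}. w True y p)"
    proof (intro allI)
      fix y b
      have e: "emeasure (\<mu> False y) (UNIV \<times> (hq n -` {b})) = emeasure (\<mu> True y) (UNIV \<times> (hq n -` {b}))"
        using NS hqs unfolding no_signaling_def by blast
      have "(\<Sum>p\<in>{p\<in>S. snd p = b}. w x y p) = measure (\<mu> x y) (UNIV \<times> (hq n -` {b}))" for x
        using sumT[of "{p\<in>S. snd p = b}" x y] finS mdist[of "{p\<in>S. snd p = b}" x y] finite_borel[of "{p\<in>S. snd p = b}"] preB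
        by simp
      then show "(\<Sum>p\<in>{p\<in>S. snd p = b}. w False y p) = (\<Sum>p\<in>{p\<in>S. snd p = b}. w True y p)"
        using e by (simp add: measure_def)
    qed
  qed
  obtain N :: nat and q K A Bf where
    C1: "\<forall>i<N. validPR (K i) (A i) (Bf i) \<and> 0 \<le> q i \<and>
      (\<forall>x y j. j < K i \<longrightarrow> (A i x j, Bf i y ((j + of_bool (x \<and> y)) mod K i)) \<in> S)" and
    C2: "(\<Sum>i<N. q i) = (\<Sum>p\<in>S. w False False p)" and
    C3: "\<forall>x y p. w x y p = (\<Sum>i<N. q i * prw (K i) (A i) (Bf i) x y p)"
    using core[OF nsw] by blast
  have "(\<Sum>p\<in>S. w False False p) = 1"
  proof -
    have "(\<Sum>p\<in>S. w False False p) = measure (\<mu> False False) (Hq n -` S)"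
      using sumT[OF finS] mdist[OF finite_borel[OF finS]] by simp
    also have "Hq n -` S = UNIV" using HS by auto
    also have "measure (\<mu> False False) UNIV = 1"
      using prob_space.prob_space[OF B(1)] spB by simp
    finally show ?thesis .
  qed
  with C2 have sumq: "(\<Sum>i<N. q i) = 1" by simp
  define \<mu>s where "\<mu>s i = (\<lambda>x y. mixture (\<lambda>_. 1 / real (K i))
       (\<lambda>j. return borel (A i x j, Bf i y ((j + of_bool (x \<and> y)) mod K i))) {..<K i})" for i
  have PR: "PR_box (\<mu>s i)" if "i < N" for i
  proof -
    have "validPR (K i) (A i) (Bf i)" using C1 that by blast
    then show ?thesis unfolding PR_box_def validPR_def
      by (intro exI[of _ "K i"] exI[of _ "A i"] exI[of _ "Bf i"]) (simp add: \<mu>s_def)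
  qed
  have eq: "\<nu> x y = mixture q (\<lambda>i. \<mu>s i x y) {..<N}" for x y
  proof (rule measure_eqI)
    show "sets (\<nu> x y) = sets (mixture q (\<lambda>i. \<mu>s i x y) {..<N})" using S\<nu> by simp
    fix C assume "C \<in> sets (\<nu> x y)"
    then have C: "C \<in> sets borel" using S\<nu> by simp
    interpret prob_space "\<nu> x y" by (rule P\<nu>)
    define X where "X i = (\<Sum>j<K i. if (A i x j, Bf i y ((j + of_bool (x \<and> y)) mod K i)) \<in> C then 1 / real (K i) else 0)" for i
    have X0: "0 \<le> X i" for i unfolding X_def by (intro sum_nonneg) auto
    have "measure (\<nu> x y) C = measure (\<mu> x y) (Hq n -` C)" by (rule mdist[OF C])
    also have "Hq n -` C = Hq n -` {p\<in>S. p \<in> C}" using HS by auto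
    also have "measure (\<mu> x y) \<dots> = measure (\<nu> x y) {p\<in>S. p \<in> C}"
      using mdist[OF finite_borel, of "{p\<in>S. p \<in> C}" x y] finS by simp
    also have "\<dots> = (\<Sum>p\<in>{p\<in>S. p \<in> C}. w x y p)" using sumT[of "{p\<in>S. p \<in> C}" x y] finS by simp
    also have "\<dots> = (\<Sum>p\<in>{p\<in>S. p \<in> C}. \<Sum>i<N. q i * prw (K i) (A i) (Bf i) x y p)"
      by (rule sum.cong[OF refl]) (use C3 in blast)
    also have "\<dots> = (\<Sum>i<N. q i * (\<Sum>p\<in>{p\<in>S. p \<in> C}. prw (K i) (A i) (Bf i) x y p))"
      by (subst sum.swap) (simp add: sum_distrib_left)
    also have "\<dots> = (\<Sum>i<N. q i * X i)"
    proof (rule sum.cong[OF refl])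
      fix i assume "i \<in> {..<N}"
      then have "\<forall>j<K i. (A i x j, Bf i y ((j + of_bool (x \<and> y)) mod K i)) \<in> S" using C1 by auto
      then show "q i * (\<Sum>p\<in>{p\<in>S. p \<in> C}. prw (K i) (A i) (Bf i) x y p) = q i * X i"
        unfolding X_def using sum_prw[OF finS, of "K i" "A i" x "Bf i" y "\<lambda>p. p \<in> C"] by simp
    qed
    finally have m: "measure (\<nu> x y) C = (\<Sum>i<N. q i * X i)" .
    have "emeasure (mixture q (\<lambda>i. \<mu>s i x y) {..<N}) C = (\<Sum>i<N. ennreal (q i) * emeasure (\<mu>s i x y) C)"
      using C1 C unfolding \<mu>s_def by (intro emeasure_mixture) auto
    also have "\<dots> = (\<Sum>i<N. ennreal (q i) * ennreal (X i))"
      unfolding \<mu>s_def X_def using C by (simp add: emeasure_PRmix ennreal_PRsum)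
    also have "\<dots> = (\<Sum>i<N. ennreal (q i * X i))"
      using C1 X0 by (intro sum.cong refl) (simp add: ennreal_mult)
    also have "\<dots> = ennreal (\<Sum>i<N. q i * X i)"
      using C1 X0 by (intro sum_ennreal) simp
    finally show "emeasure (\<nu> x y) C = emeasure (mixture q (\<lambda>i. \<mu>s i x y) {..<N}) C"
      using m emeasure_eq_measure by simp
  qed
  show ?thesis
    unfolding Conv_PR_def \<nu>_def[symmetric]
    using PR C1 sumq eq by (intro CollectI exI[of _ N] exI[of _ q] exI[of _ \<mu>s]) auto
qed


theorem theorem1:
  fixes \<mu> :: behaviour
  assumes "is_behaviour \<mu>"
  shows "no_signaling \<mu> \<longleftrightarrow>
    (\<exists>s :: nat \<Rightarrow> behaviour. (\<forall>n. s n \<in> Conv_PR) \<and> (\<forall>x y. weak_conv_plane (\<lambda>n. s n x y) (\<mu> x y)))"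
proof
  assume NS: "no_signaling \<mu>"
  have B: "prob_space (\<mu> x y)" "sets (\<mu> x y) = sets borel" for x y
    using assms unfolding is_behaviour_def by auto
  have "(\<forall>n. (\<lambda>x y. distr (\<mu> x y) borel (Hq n)) \<in> Conv_PR) \<and>
      (\<forall>x y. weak_conv_plane (\<lambda>n. distr (\<mu> x y) borel (Hq n)) (\<mu> x y))"
    using conv_of_NS[OF NS] weak_conv_Hq[OF B] by blast
  then show "\<exists>s :: nat \<Rightarrow> behaviour. (\<forall>n. s n \<in> Conv_PR) \<and> (\<forall>x y. weak_conv_plane (\<lambda>n. s n x y) (\<mu> x y))"
    by (intro exI[of _ "\<lambda>n x y. distr (\<mu> x y) borel (Hq n)"]) simp
next
  assume "\<exists>s :: nat \<Rightarrow> behaviour. (\<forall>n. s n \<in> Conv_PR) \<and> (\<forall>x y. weak_conv_plane (\<lambda>n. s n x y) (\<mu> x y))"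
  then obtain s :: "nat \<Rightarrow> behaviour" where "\<forall>n. s n \<in> Conv_PR" "\<forall>x y. weak_conv_plane (\<lambda>n. s n x y) (\<mu> x y)"
    by blast
  then show "no_signaling \<mu>" by (rule limit_NS[OF assms])
qed

end
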